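(* Let $P\subset\mathbb C$ be a convex polygon having two edges parallel to the real axis, each of length $1$. Let $t_1<t_2<\cdots<t_m$ be real numbers. Then $$\max_{i=1,\dots,m-1}(t_{i+1}-t_i)\leq 1$$ if and only if $\bigcup_{i=1}^m (P+t_i)$ is a convex set.
   Context: $\mathbb C$ is identified with $\mathbb R^2$. For $t\in\mathbb C$, $P+t=\{x+t\mid x\in P\}$. A polygon may degenerate to a segment (regarded as having two overlapping edges). *)

theory Defs
  imports "HOL-Analysis.Analysis"
begin

text \<open>A convex polygon in the complex plane: a polytope (convex hull of finitely many
points) of affine dimension 1 or 2; dimension 1 is the degenerate (segment) case.\<close>
definition convex_polygon :: "complex set \<Rightarrow> bool" where
  "convex_polygon P \<longleftrightarrow> polytope P \<and> aff_dim P \<ge> 1"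

definition is_edge_of :: "complex set \<Rightarrow> complex set \<Rightarrow> bool" where
  "is_edge_of E P \<longleftrightarrow> E face_of P \<and> aff_dim E = 1"

definition horizontal_unit_segment :: "complex set \<Rightarrow> bool" where
  "horizontal_unit_segment E \<longleftrightarrow> (\<exists>a. E = closed_segment a (a + 1))"

text \<open>P has two edges parallel to the real axis, each of length 1. A degenerate polygon
(a segment) is regarded as having two overlapping edges, both equal to the segment.\<close>
definition two_horizontal_unit_edges :: "complex set \<Rightarrow> bool" where
  "two_horizontal_unit_edges P \<longleftrightarrow>
     (aff_dim P = 2 \<and> (\<exists>E1 E2. E1 \<noteq> E2 \<and> is_edge_of E1 P \<and> is_edge_of E2 P \<and>
        horizontal_unit_segment E1 \<and> horizontal_unit_segment E2))
   \<or> (aff_dim P = 1 \<and> horizontal_unit_segment P)"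

end

theory Submission
  imports Defs
begin

lemma seg_mem:
  "a + complex_of_real s \<in> closed_segment a (a + 1) \<longleftrightarrow> 0 \<le> s \<and> s \<le> 1"
proof
  assume "a + complex_of_real s \<in> closed_segment a (a + 1)"
  then obtain u where u: "0 \<le> u" "u \<le> 1" "a + complex_of_real s = (1 - u) *\<^sub>R a + u *\<^sub>R (a+1)"
    by (auto simp: in_segment)
  then have "complex_of_real s = complex_of_real u" by (simp add: scaleR_conv_of_real algebra_simps)
  then show "0 \<le> s \<and> s \<le> 1" using u by simp
next
  assume "0 \<le> s \<and> s \<le> 1"
  then show "a + complex_of_real s \<in> closed_segment a (a + 1)"
    unfolding in_segment by (intro exI[of _ s]) (simp add: scaleR_conv_of_real algebra_simps)
qed

lemma seg_elem:
  assumes "x \<in> closed_segment a (a + 1)"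
  shows "\<exists>s. x = a + complex_of_real s \<and> 0 \<le> s \<and> s \<le> 1"
proof -
  obtain u where u: "0 \<le> u" "u \<le> 1" "x = (1 - u) *\<^sub>R a + u *\<^sub>R (a+1)"
    using assms by (auto simp: in_segment)
  then show ?thesis by (intro exI[of _ u]) (simp add: scaleR_conv_of_real algebra_simps)
qed

lemma comb_line:
  "(1-u) *\<^sub>R (a + complex_of_real x) + u *\<^sub>R (a + complex_of_real y) = a + complex_of_real ((1-u)*x + u*y)"
  by (simp add: scaleR_conv_of_real algebra_simps)

lemma face_line:
  assumes "closed_segment a (a + 1) face_of P"
  shows "a + complex_of_real s \<in> P \<longleftrightarrow> 0 \<le> s \<and> s \<le> 1"
proof
  have sub: "closed_segment a (a + 1) \<subseteq> P" using assms face_of_imp_subset by blast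
  assume sP: "a + complex_of_real s \<in> P"
  show "0 \<le> s \<and> s \<le> 1"
  proof (rule ccontr)
    assume "\<not> (0 \<le> s \<and> s \<le> 1)"
    then consider "s < 0" | "s > 1" by linarith
    then show False
    proof cases
      case 1
      have aP: "a + 1 \<in> P" using sub by (metis ends_in_segment(2) subsetD)
      have "a \<in> open_segment (a + complex_of_real s) (a + 1)"
        unfolding in_segment
      proof (intro conjI exI[of _ "-s/(1-s)"])
        show "a + complex_of_real s \<noteq> a + 1" using 1
          by (metis add_left_cancel of_real_1 of_real_eq_iff less_irrefl zero_less_one less_trans)
        show "0 < -s/(1-s)" using 1 by (simp add: field_simps)
        show "-s/(1-s) < 1" using 1 by (simp add: field_simps)
        have "1 - s \<noteq> 0" using 1 by simp
        then have "(1 - - s / (1 - s)) * s + (- s / (1 - s)) * 1 = 0" by (simp add: field_simps)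
        then show "a = (1 - - s / (1 - s)) *\<^sub>R (a + complex_of_real s) + (- s / (1 - s)) *\<^sub>R (a + 1)"
          using comb_line[of "- s / (1 - s)" a s 1] by simp
      qed
      then have "a + complex_of_real s \<in> closed_segment a (a + 1)"
        using face_ofD[OF assms _ sP aP] by auto
      then show False using 1 seg_mem by auto
    next
      case 2
      have aP: "a \<in> P" using sub by (metis ends_in_segment(1) subsetD)
      have "a + 1 \<in> open_segment a (a + complex_of_real s)"
        unfolding in_segment
      proof (intro conjI exI[of _ "1/s"])
        show "a \<noteq> a + complex_of_real s" using 2 by simp
        show "0 < 1/s" using 2 by simp
        show "1/s < 1" using 2 by simp
        have "s \<noteq> 0" using 2 by simp
        then have "(1 - 1 / s) * 0 + (1 / s) * s = 1" by (simp add: field_simps)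
        then show "a + 1 = (1 - 1 / s) *\<^sub>R a + (1 / s) *\<^sub>R (a + complex_of_real s)"
          using comb_line[of "1/s" a 0 s] by simp
      qed
      then have "a + complex_of_real s \<in> closed_segment a (a + 1)"
        using face_ofD[OF assms _ aP sP] by auto
      then show False using 2 seg_mem by auto
    qed
  qed
next
  assume "0 \<le> s \<and> s \<le> 1"
  then show "a + complex_of_real s \<in> P"
    using seg_mem face_of_imp_subset[OF assms] by blast
qed

lemma no_between:
  assumes F: "closed_segment a (a + 1) face_of P" and cv: "convex P"
    and bP: "b \<in> P" and pP: "p \<in> P"
    and btw: "(Im p < Im a \<and> Im a < Im b) \<or> (Im b < Im a \<and> Im a < Im p)"
  shows False
proof -
  define l where "l = (Im a - Im p) / (Im b - Im p)"
  have ne: "Im b - Im p \<noteq> 0" using btw by auto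
  have l0: "0 < l" and l1: "l < 1" using btw unfolding l_def by (auto simp: field_simps)
  define c where "c = (1 - l) *\<^sub>R p + l *\<^sub>R b"
  have cP: "c \<in> P" unfolding c_def using cv pP bP l0 l1 by (simp add: convex_alt)
  have "Im c = Im p + l * (Im b - Im p)" unfolding c_def by (simp add: algebra_simps)
  also have "\<dots> = Im a" unfolding l_def using ne by simp
  finally have Imc: "Im c = Im a" .
  have ceq: "c = a + complex_of_real (Re c - Re a)" using Imc by (simp add: complex_eq_iff)
  then have "0 \<le> Re c - Re a \<and> Re c - Re a \<le> 1" using face_line[OF F] cP by metis
  then have cE: "c \<in> closed_segment a (a + 1)" using seg_mem ceq by metis
  have "p \<noteq> b" using btw by auto
  then have "c \<in> open_segment p b" unfolding in_segment c_def using l0 l1 by blast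
  then have "p \<in> closed_segment a (a + 1)" using face_ofD[OF F _ pP bP cE] by blast
  then obtain s where "p = a + complex_of_real s" using seg_elem by blast
  then have "Im p = Im a" by simp
  then show False using btw by auto
qed

lemma chord_nondeg:
  assumes F1: "closed_segment a (a + 1) face_of P" and F2: "closed_segment b (b + 1) face_of P"
    and cv: "convex P" and ab: "Im a < Im b" and pP: "p \<in> P"
  shows "\<exists>\<alpha> \<beta>. \<alpha> \<ge> 0 \<and> \<beta> \<ge> 0 \<and> \<alpha> + \<beta> \<ge> 1 \<and> p - complex_of_real \<alpha> \<in> P \<and> p + complex_of_real \<beta> \<in> P"
proof -
  have aP: "a \<in> P" and a1P: "a + 1 \<in> P" using face_line[OF F1, of 0] face_line[OF F1, of 1] by auto
  have bP: "b \<in> P" and b1P: "b + 1 \<in> P" using face_line[OF F2, of 0] face_line[OF F2, of 1] by auto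
  have lo: "Im a \<le> Im p"
  proof (rule ccontr)
    assume "\<not> Im a \<le> Im p"
    then show False using no_between[OF F1 cv bP pP] ab by auto
  qed
  have hi: "Im p \<le> Im b"
  proof (rule ccontr)
    assume "\<not> Im p \<le> Im b"
    then show False using no_between[OF F2 cv aP pP] ab by auto
  qed
  define l where "l = (Im p - Im a) / (Im b - Im a)"
  have l0: "0 \<le> l" and l1: "l \<le> 1" using lo hi ab unfolding l_def by (auto simp: field_simps)
  define q where "q = (1 - l) *\<^sub>R a + l *\<^sub>R b"
  have qP: "q \<in> P" unfolding q_def using cv aP bP l0 l1 by (simp add: convex_alt)
  have "(1 - l) *\<^sub>R (a + 1) + l *\<^sub>R (b + 1) \<in> P" using cv a1P b1P l0 l1 by (simp add: convex_alt)
  moreover have "(1 - l) *\<^sub>R (a + 1) + l *\<^sub>R (b + 1) = q + 1"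
    unfolding q_def by (simp add: scaleR_conv_of_real algebra_simps)
  ultimately have q1P: "q + 1 \<in> P" by simp
  have "Im q = Im a + l * (Im b - Im a)" unfolding q_def by (simp add: algebra_simps)
  also have "\<dots> = Im p" unfolding l_def using ab by simp
  finally have Imq: "Im q = Im p" .
  define d where "d = Re p - Re q"
  have peq: "p = q + complex_of_real d" using Imq unfolding d_def by (simp add: complex_eq_iff)
  consider "d \<le> 0" | "d \<ge> 1" | "0 < d \<and> d < 1" by linarith
  then show ?thesis
  proof cases
    case 1
    have "p + complex_of_real (1 - d) = q + 1" using peq by simp
    then have "p + complex_of_real (1 - d) \<in> P" using q1P by metis
    then show ?thesis using 1 pP by (intro exI[of _ 0] exI[of _ "1 - d"]) auto
  next
    case 2
    have "p - complex_of_real d = q" using peq by simp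
    then show ?thesis using 2 pP qP by (intro exI[of _ d] exI[of _ 0]) auto
  next
    case 3
    have "p - complex_of_real d = q" "p + complex_of_real (1 - d) = q + 1" using peq by simp_all
    then have "p - complex_of_real d \<in> P" "p + complex_of_real (1 - d) \<in> P" using qP q1P by metis+
    then show ?thesis using 3 by (intro exI[of _ d] exI[of _ "1 - d"]) auto
  qed
qed

lemma key:
  assumes "convex_polygon P" and "two_horizontal_unit_edges P"
  shows "\<exists>a. (\<forall>s. a + complex_of_real s \<in> P \<longleftrightarrow> 0 \<le> s \<and> s \<le> 1) \<and>
    (\<forall>p\<in>P. \<exists>\<alpha> \<beta>. \<alpha> \<ge> 0 \<and> \<beta> \<ge> 0 \<and> \<alpha> + \<beta> \<ge> 1 \<and> p - complex_of_real \<alpha> \<in> P \<and> p + complex_of_real \<beta> \<in> P)"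
proof -
  have cv: "convex P" using assms(1) polytope_imp_convex unfolding convex_polygon_def by blast
  from assms(2) consider
    (nd) E1 E2 where "E1 \<noteq> E2" "is_edge_of E1 P" "is_edge_of E2 P"
        "horizontal_unit_segment E1" "horizontal_unit_segment E2"
    | (dg) "horizontal_unit_segment P"
    unfolding two_horizontal_unit_edges_def by blast
  then show ?thesis
  proof cases
    case nd
    then obtain a b where E1: "E1 = closed_segment a (a + 1)" and E2: "E2 = closed_segment b (b + 1)"
      unfolding horizontal_unit_segment_def by blast
    have F1: "closed_segment a (a + 1) face_of P" using nd E1 unfolding is_edge_of_def by blast
    have F2: "closed_segment b (b + 1) face_of P" using nd E2 unfolding is_edge_of_def by blast
    have "a \<noteq> b" using nd E1 E2 by blast
    have "Im a \<noteq> Im b"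
    proof
      assume eq: "Im a = Im b"
      have "b = a + complex_of_real (Re b - Re a)" using eq by (simp add: complex_eq_iff)
      moreover have "b \<in> P" using face_line[OF F2, of 0] by simp
      ultimately have r1: "0 \<le> Re b - Re a" using face_line[OF F1] by metis
      have "a = b + complex_of_real (Re a - Re b)" using eq by (simp add: complex_eq_iff)
      moreover have "a \<in> P" using face_line[OF F1, of 0] by simp
      ultimately have r2: "0 \<le> Re a - Re b" using face_line[OF F2] by metis
      from r1 r2 eq have "a = b" by (simp add: complex_eq_iff)
      with \<open>a \<noteq> b\<close> show False by simp
    qed
    then have "Im a < Im b \<or> Im b < Im a" by linarith
    then have "\<forall>p\<in>P. \<exists>\<alpha> \<beta>. \<alpha> \<ge> 0 \<and> \<beta> \<ge> 0 \<and> \<alpha> + \<beta> \<ge> 1 \<and> p - complex_of_real \<alpha> \<in> P \<and> p + complex_of_real \<beta> \<in> P"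
      using chord_nondeg[OF F1 F2 cv] chord_nondeg[OF F2 F1 cv] by blast
    then show ?thesis using face_line[OF F1] by blast
  next
    case dg
    then obtain a where P: "P = closed_segment a (a + 1)" unfolding horizontal_unit_segment_def by blast
    have "\<forall>p\<in>P. \<exists>\<alpha> \<beta>. \<alpha> \<ge> 0 \<and> \<beta> \<ge> 0 \<and> \<alpha> + \<beta> \<ge> 1 \<and> p - complex_of_real \<alpha> \<in> P \<and> p + complex_of_real \<beta> \<in> P"
    proof
      fix p assume "p \<in> P"
      then obtain s where s: "p = a + complex_of_real s" "0 \<le> s" "s \<le> 1" using seg_elem P by blast
      have "p - complex_of_real s = a + complex_of_real 0" "p + complex_of_real (1 - s) = a + complex_of_real 1"
        using s by simp_all
      then have "p - complex_of_real s \<in> P" "p + complex_of_real (1 - s) \<in> P" using P seg_mem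
        by (metis order_refl zero_le_one)+
      then show "\<exists>\<alpha> \<beta>. \<alpha> \<ge> 0 \<and> \<beta> \<ge> 0 \<and> \<alpha> + \<beta> \<ge> 1 \<and> p - complex_of_real \<alpha> \<in> P \<and> p + complex_of_real \<beta> \<in> P"
        using s by (intro exI[of _ s] exI[of _ "1 - s"]) auto
    qed
    then show ?thesis using P seg_mem by blast
  qed
qed

lemma tmono:
  fixes t :: "nat \<Rightarrow> real" and m j k :: nat
  assumes "\<And>i. 1 \<le> i \<Longrightarrow> i < m \<Longrightarrow> t i < t (i + 1)"
  shows "1 \<le> j \<Longrightarrow> j \<le> k \<Longrightarrow> k \<le> m \<Longrightarrow> t j \<le> (t k :: real)"
proof (induction k)
  case 0
  then show ?case by simp
next
  case (Suc k)
  show ?case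
  proof (cases "j = Suc k")
    case True then show ?thesis by simp
  next
    case False
    then have "t j \<le> t k" using Suc by simp
    moreover have "t k < t (k + 1)" using assms Suc False by simp
    ultimately show ?thesis by simp
  qed
qed

lemma locate:
  fixes t :: "nat \<Rightarrow> real" and n :: nat
  shows "1 \<le> n \<Longrightarrow> t 1 \<le> s \<Longrightarrow> s \<le> t n \<Longrightarrow> \<exists>i. 1 \<le> i \<and> i \<le> n \<and> t i \<le> s \<and> (i < n \<longrightarrow> s \<le> t (i + 1))"
proof (induction n)
  case 0
  then show ?case by simp
next
  case (Suc n)
  show ?case
  proof (cases "n = 0")
    case True
    then show ?thesis using Suc by (intro exI[of _ 1]) auto
  next
    case False
    show ?thesis
    proof (cases "s \<le> t n")
      case True
      then obtain i where i: "1 \<le> i" "i \<le> n" "t i \<le> s" "i < n \<longrightarrow> s \<le> t (i + 1)"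
        using Suc False by auto
      then show ?thesis using Suc by (intro exI[of _ i]) (cases "i = n"; auto)
    next
      case False
      then show ?thesis using Suc \<open>n \<noteq> 0\<close> by (intro exI[of _ n]) auto
    qed
  qed
qed

theorem proposition2p9:
  fixes P :: "complex set" and t :: "nat \<Rightarrow> real" and m :: nat
  assumes "convex_polygon P"
    and "two_horizontal_unit_edges P"
    and "\<And>i. 1 \<le> i \<Longrightarrow> i < m \<Longrightarrow> t i < t (i + 1)"
  shows "(\<forall>i\<in>{1..<m}. t (i + 1) - t i \<le> 1) \<longleftrightarrow>
         convex (\<Union>i\<in>{1..m}. (\<lambda>x. x + complex_of_real (t i)) ` P)"
proof -
  have cv: "convex P" using assms(1) polytope_imp_convex unfolding convex_polygon_def by blast
  obtain a where A: "\<And>s. a + complex_of_real s \<in> P \<longleftrightarrow> 0 \<le> s \<and> s \<le> 1"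
    and C: "\<And>p. p \<in> P \<Longrightarrow> \<exists>\<alpha> \<beta>. \<alpha> \<ge> 0 \<and> \<beta> \<ge> 0 \<and> \<alpha> + \<beta> \<ge> 1 \<and> p - complex_of_real \<alpha> \<in> P \<and> p + complex_of_real \<beta> \<in> P"
    using key[OF assms(1,2)] by blast
  have mono: "\<And>j k. 1 \<le> j \<Longrightarrow> j \<le> k \<Longrightarrow> k \<le> m \<Longrightarrow> t j \<le> t k"
    using tmono[of m t, OF assms(3)] by blast
  define U where "U = (\<Union>i\<in>{1..m}. (\<lambda>x. x + complex_of_real (t i)) ` P)"
  have memU: "y \<in> U \<longleftrightarrow> (\<exists>i p. 1 \<le> i \<and> i \<le> m \<and> p \<in> P \<and> y = p + complex_of_real (t i))" for y
    unfolding U_def by auto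
  have seg: "p + complex_of_real (c * d) \<in> P" if "p \<in> P" "p + complex_of_real d \<in> P" "0 \<le> c" "c \<le> 1" for p c d
  proof -
    have "(1 - c) *\<^sub>R p + c *\<^sub>R (p + complex_of_real d) \<in> P" using cv that by (simp add: convex_alt)
    moreover have "(1 - c) *\<^sub>R p + c *\<^sub>R (p + complex_of_real d) = p + complex_of_real (c * d)"
      by (simp add: scaleR_conv_of_real algebra_simps)
    ultimately show ?thesis by simp
  qed
  show ?thesis unfolding U_def[symmetric]
  proof
    assume gaps: "\<forall>i\<in>{1..<m}. t (i + 1) - t i \<le> 1"
    show "convex U"
    proof (cases "m = 0")
      case True
      then have "U = {}" unfolding U_def by auto
      then show ?thesis by simp
    next
      case False
      have Ueq: "U = {y. \<exists>p s. p \<in> P \<and> t 1 \<le> s \<and> s \<le> t m \<and> y = p + complex_of_real s}"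
      proof (intro set_eqI iffI)
        fix y assume "y \<in> U"
        then obtain i p where "1 \<le> i" "i \<le> m" "p \<in> P" "y = p + complex_of_real (t i)" using memU by blast
        moreover have "t 1 \<le> t i" "t i \<le> t m" using mono calculation by auto
        ultimately show "y \<in> {y. \<exists>p s. p \<in> P \<and> t 1 \<le> s \<and> s \<le> t m \<and> y = p + complex_of_real s}"
          by blast
      next
        fix y assume "y \<in> {y. \<exists>p s. p \<in> P \<and> t 1 \<le> s \<and> s \<le> t m \<and> y = p + complex_of_real s}"
        then obtain p s where ps: "p \<in> P" "t 1 \<le> s" "s \<le> t m" "y = p + complex_of_real s" by blast
        obtain i where i: "1 \<le> i" "i \<le> m" "t i \<le> s" "i < m \<longrightarrow> s \<le> t (i + 1)"
          using locate[of m t s] ps False by auto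
        show "y \<in> U"
        proof (cases "i = m")
          case True
          then have "s = t m" using i ps by simp
          then show ?thesis using memU ps i True by blast
        next
          case False
          then have im: "i < m" using i by simp
          then have s1: "s \<le> t (i + 1)" and g: "t (i + 1) - t i \<le> 1" using i gaps by auto
          obtain \<alpha> \<beta> where ab: "\<alpha> \<ge> 0" "\<beta> \<ge> 0" "\<alpha> + \<beta> \<ge> 1"
            "p - complex_of_real \<alpha> \<in> P" "p + complex_of_real \<beta> \<in> P" using C[OF ps(1)] by blast
          show ?thesis
          proof (cases "s - t i \<le> \<beta>")
            case True
            have "p + complex_of_real (s - t i) \<in> P"
            proof (cases "\<beta> = 0")
              case True
              then show ?thesis using \<open>s - t i \<le> \<beta>\<close> i ps by simp
            next
              case False
              have c0: "0 \<le> (s - t i) / \<beta>" "(s - t i) / \<beta> \<le> 1"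
                using ab i \<open>s - t i \<le> \<beta>\<close> False by auto
              have "p + complex_of_real (((s - t i) / \<beta>) * \<beta>) \<in> P"
                by (rule seg[OF ps(1) ab(5) c0])
              moreover have "((s - t i) / \<beta>) * \<beta> = s - t i" using False by simp
              ultimately show ?thesis by simp
            qed
            moreover have "y = (p + complex_of_real (s - t i)) + complex_of_real (t i)" using ps by simp
            ultimately show ?thesis using memU i by blast
          next
            case False
            then have v: "t (i + 1) - s \<le> \<alpha>" using g ab by linarith
            have "p + complex_of_real (- (t (i + 1) - s)) \<in> P"
            proof (cases "\<alpha> = 0")
              case True
              then show ?thesis using v s1 ps by simp
            next
              case nz: False
              have c0: "0 \<le> (t (i + 1) - s) / \<alpha>" "(t (i + 1) - s) / \<alpha> \<le> 1"
                using ab nz v s1 by auto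
              have m1: "p + complex_of_real (-\<alpha>) \<in> P" using ab(4) by simp
              have "p + complex_of_real (((t (i + 1) - s) / \<alpha>) * (-\<alpha>)) \<in> P"
                by (rule seg[OF ps(1) m1 c0])
              moreover have "((t (i + 1) - s) / \<alpha>) * (-\<alpha>) = - (t (i + 1) - s)" using nz by simp
              ultimately show ?thesis by metis
            qed
            moreover have "y = (p + complex_of_real (- (t (i + 1) - s))) + complex_of_real (t (i + 1))"
              using ps by simp
            ultimately show ?thesis using memU i im by (metis Suc_eq_plus1 Suc_leI le_add2)
          qed
        qed
      qed
      show ?thesis unfolding Ueq convex_alt
      proof (intro ballI allI impI)
        fix x y and u :: real assume "x \<in> {y. \<exists>p s. p \<in> P \<and> t 1 \<le> s \<and> s \<le> t m \<and> y = p + complex_of_real s}"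
          "y \<in> {y. \<exists>p s. p \<in> P \<and> t 1 \<le> s \<and> s \<le> t m \<and> y = p + complex_of_real s}"
          and u: "0 \<le> u \<and> u \<le> 1"
        then obtain p1 s1 p2 s2 where h: "p1 \<in> P" "t 1 \<le> s1" "s1 \<le> t m" "x = p1 + complex_of_real s1"
          "p2 \<in> P" "t 1 \<le> s2" "s2 \<le> t m" "y = p2 + complex_of_real s2" by blast
        have "(1 - u) *\<^sub>R p1 + u *\<^sub>R p2 \<in> P" using cv h u by (simp add: convex_alt)
        moreover have "t 1 \<le> (1 - u) * s1 + u * s2"
        proof -
          have "(1 - u) * t 1 \<le> (1 - u) * s1" "u * t 1 \<le> u * s2" using h u by (simp_all add: mult_left_mono)
          then show ?thesis by (simp add: algebra_simps)
        qed
        moreover have "(1 - u) * s1 + u * s2 \<le> t m"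
        proof -
          have "(1 - u) * s1 \<le> (1 - u) * t m" "u * s2 \<le> u * t m" using h u by (simp_all add: mult_left_mono)
          then show ?thesis by (simp add: algebra_simps)
        qed
        moreover have "(1 - u) *\<^sub>R x + u *\<^sub>R y = ((1 - u) *\<^sub>R p1 + u *\<^sub>R p2) + complex_of_real ((1 - u) * s1 + u * s2)"
          using h by (simp add: scaleR_conv_of_real algebra_simps)
        ultimately show "(1 - u) *\<^sub>R x + u *\<^sub>R y \<in> {y. \<exists>p s. p \<in> P \<and> t 1 \<le> s \<and> s \<le> t m \<and> y = p + complex_of_real s}"
          by blast
      qed
    qed
  next
    assume cU: "convex U"
    show "\<forall>i\<in>{1..<m}. t (i + 1) - t i \<le> 1"
    proof (rule ccontr)
      assume "\<not> ?thesis"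
      then obtain i where i: "1 \<le> i" "i < m" "t (i + 1) - t i > 1" by auto
      have "a + complex_of_real 1 \<in> P" "a + complex_of_real 0 \<in> P" using A[of 1] A[of 0] by simp_all
      then have P1: "a + 1 \<in> P" and P0: "a \<in> P" by simp_all
      have "a + complex_of_real (1 + t i) = (a + 1) + complex_of_real (t i)" by (simp add: algebra_simps)
      then have xU: "a + complex_of_real (1 + t i) \<in> U"
        using memU i P1 by (metis less_imp_le)
      have zU: "a + complex_of_real (t (i + 1)) \<in> U"
        using memU i P0 by (metis Suc_eq_plus1 Suc_leI le_add2)
      define c where "c = (1 + t i + t (i + 1)) / 2"
      have "(1 - 1/2) *\<^sub>R (a + complex_of_real (1 + t i)) + (1/2) *\<^sub>R (a + complex_of_real (t (i + 1))) \<in> U"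
        by (rule convexD_alt[OF cU xU zU]) simp_all
      moreover have "(1 - 1/2) *\<^sub>R (a + complex_of_real (1 + t i)) + (1/2) *\<^sub>R (a + complex_of_real (t (i + 1))) = a + complex_of_real c"
        unfolding comb_line c_def by (simp add: field_simps)
      ultimately have "a + complex_of_real c \<in> U" by simp
      then obtain j p where j: "1 \<le> j" "j \<le> m" "p \<in> P" "a + complex_of_real c = p + complex_of_real (t j)"
        using memU by blast
      then have "p = (a + complex_of_real c) - complex_of_real (t j)" by simp
      then have "p = a + complex_of_real (c - t j)" by (simp add: of_real_diff add_diff_eq)
      then have r: "0 \<le> c - t j" "c - t j \<le> 1" using A[of "c - t j"] j(3) by simp_all
      show False
      proof (cases "j \<le> i")
        case True
        then have "t j \<le> t i" using mono j i by simp
        moreover have "2 * c = 1 + t i + t (i + 1)" unfolding c_def by simp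
        ultimately show False using r i by linarith
      next
        case False
        then have "t (i + 1) \<le> t j" using mono j i by simp
        moreover have "2 * c = 1 + t i + t (i + 1)" unfolding c_def by simp
        ultimately show False using r i by linarith
      qed
    qed
  qed
qed

end
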